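(* For $N\ge1$ let $\mathbf{m}=N(1,0,\dots,0)^\top\in\mathbb{R}^{N+1}$, $\mathbf{M}=\mathrm{diag}(\mathbf{m})$, and let $\mathbf{Q}_N$ be the tridiagonal matrix with $(\mathbf{Q}_N)_{kk}=-N$, $(\mathbf{Q}_N)_{k+1,k}=N-k$, $(\mathbf{Q}_N)_{k-1,k}=k$ (indices $0,\dots,N$) and zeros elsewhere. Fix $\mu>0$, let $\mathbf{p}=(p_0,\dots,p_N)$ be the positive vector with $\sum_ip_i=1$ satisfying $(\mathbf{M}+\mu\mathbf{Q}_N)\mathbf{p}=\overline{m}\,\mathbf{p}$ with $\overline{m}=\mathbf{m}\cdot\mathbf{p}$, let $\overline{r}=\overline{m}/N$ and $u=\mu/\overline{r}$. Then for every $a\in\{1,\dots,N\}$, $$\left|p_a-\frac{u^a}{(1+u)^{a+1}}\right|\le\frac{u^{a+1}2^a(a+1)}{\sqrt{N}}+\left(1-\frac{\binom{N}{a}a!}{N^a}\right)\frac{u^a}{(1+u)^{a+1}}.$$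
   Context: $\mathbf{p}$ is the normalized Perron eigenvector of $\mathbf{M}+\mu\mathbf{Q}_N$ (Crow–Kimura quasispecies model with single peaked fitness landscape) and $\overline{m}$ is the corresponding dominant eigenvalue. *)

theory Defs
  imports Complex_Main
begin

text \<open>Vectors in R^(N+1) and (N+1)x(N+1) matrices are indexed by 0..N and represented
  as functions nat => real resp. nat => nat => real (entries outside 0..N irrelevant).\<close>

definition fit_vec :: "nat \<Rightarrow> nat \<Rightarrow> real" where
  "fit_vec N i = (if i = 0 then real N else 0)"

definition fit_mat :: "nat \<Rightarrow> nat \<Rightarrow> nat \<Rightarrow> real" where
  "fit_mat N i j = (if i = j then fit_vec N i else 0)"

definition mut_mat :: "nat \<Rightarrow> nat \<Rightarrow> nat \<Rightarrow> real" where
  "mut_mat N i j =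
     (if i = j then - real N
      else if i = j + 1 then real N - real j
      else if j = i + 1 then real j
      else 0)"

definition mat_vec :: "nat \<Rightarrow> (nat \<Rightarrow> nat \<Rightarrow> real) \<Rightarrow> (nat \<Rightarrow> real) \<Rightarrow> nat \<Rightarrow> real" where
  "mat_vec N A x i = (\<Sum>j = 0..N. A i j * x j)"

definition dot_vec :: "nat \<Rightarrow> (nat \<Rightarrow> real) \<Rightarrow> (nat \<Rightarrow> real) \<Rightarrow> real" where
  "dot_vec N x y = (\<Sum>i = 0..N. x i * y i)"

end

theory Submission
  imports Defs
begin

lemma row_eq:
  fixes N :: nat and mu :: real and p :: "nat \<Rightarrow> real"
  assumes "k \<le> N"
  shows "mat_vec N (\<lambda>i j. fit_mat N i j + mu * mut_mat N i j) p k =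
    (if k = 0 then real N * p 0 else 0) + mu * (- real N * p k
      + (if k \<ge> 1 then (real N - real k + 1) * p (k - 1) else 0)
      + (if k < N then (real k + 1) * p (k + 1) else 0))"
proof -
  have pt: "\<And>j. (fit_mat N k j + mu * mut_mat N k j) * p j =
     (if j = k then fit_vec N k * p k else 0) + mu * ((if j = k then - real N * p k else 0)
      + (if j = k - 1 \<and> k \<ge> 1 then (real N - real j) * p j else 0)
      + (if j = k + 1 then real j * p j else 0))"
    by (auto simp: fit_mat_def mut_mat_def algebra_simps)
  have s1: "(\<Sum>j=0..N. (if j = k - 1 \<and> k \<ge> 1 then (real N - real j) * p j else 0))
     = (if k \<ge> 1 then (real N - real k + 1) * p (k - 1) else 0)"
  proof (cases "k \<ge> 1")
    case True
    then have "(\<Sum>j=0..N. (if j = k - 1 \<and> k \<ge> 1 then (real N - real j) * p j else 0))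
       = (\<Sum>j=0..N. (if j = k - 1 then (real N - real j) * p j else 0))" by simp
    also have "\<dots> = (real N - real (k-1)) * p (k-1)" using assms True by (subst sum.delta) auto
    finally show ?thesis using True by (simp add: of_nat_diff)
  qed simp
  have s2: "(\<Sum>j=0..N. (if j = k + 1 then real j * p j else 0))
     = (if k < N then (real k + 1) * p (k + 1) else 0)"
    by (simp add: sum.delta')
  show ?thesis
    unfolding mat_vec_def pt sum.distrib sum_distrib_left[symmetric] s1 s2
    using assms by (simp add: sum.delta' fit_vec_def)
qed

lemma tail:
  fixes N :: nat and mu r :: real and p :: "nat \<Rightarrow> real"
  assumes N1: "N \<ge> 1"
    and eqk: "\<And>k. 1 \<le> k \<Longrightarrow> k \<le> N \<Longrightarrow> mu * (- real N * p k + (real N - real k + 1) * p (k - 1)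
      + (if k < N then (real k + 1) * p (k + 1) else 0)) = real N * r * p k"
    and j: "1 \<le> j" "j \<le> N"
  shows "mu * ((real N - real j + 1) * p (j - 1) - real j * p j) = real N * r * (\<Sum>k=j..N. p k)"
  using j(2)
proof (induction j rule: inc_induct)
  case base
  have "mu * (- real N * p N + (real N - real N + 1) * p (N - 1)
      + (if N < N then (real N + 1) * p (N + 1) else 0)) = real N * r * p N"
    using eqk[of N] N1 by simp
  then show ?case by (simp add: algebra_simps)
next
  case (step n)
  have n1: "1 \<le> n" using j step by simp
  have e: "mu * (- real N * p n + (real N - real n + 1) * p (n - 1)
      + (real n + 1) * p (n + 1)) = real N * r * p n"
    using eqk[of n] n1 step by simp
  have s: "(\<Sum>k=n..N. p k) = p n + (\<Sum>k=Suc n..N. p k)"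
    using step by (simp add: sum.atLeast_Suc_atMost)
  have ih: "mu * ((real N - real (Suc n) + 1) * p (Suc n - 1) - real (Suc n) * p (Suc n))
     = real N * r * (\<Sum>k=Suc n..N. p k)" by (rule step.IH)
  show ?case unfolding s using e ih by (simp add: algebra_simps)
qed

lemma two_pow_ge: "real a + 1 \<le> 2 ^ a"
proof (induction a)
  case (Suc a) then show ?case by simp
qed simp

theorem lemma1:
  fixes N :: nat and mu :: real and p :: "nat \<Rightarrow> real"
  assumes "N \<ge> 1" and "mu > 0"
    and "\<forall>i\<le>N. p i > 0"
    and "(\<Sum>i = 0..N. p i) = 1"
    and "\<forall>k\<le>N. mat_vec N (\<lambda>i j. fit_mat N i j + mu * mut_mat N i j) p k
                    = dot_vec N (fit_vec N) p * p k"
  shows "\<forall>a \<in> {1..N}.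
    let mbar = dot_vec N (fit_vec N) p; rbar = mbar / real N; u = mu / rbar in
    \<bar>p a - u ^ a / (1 + u) ^ (a + 1)\<bar>
      \<le> u ^ (a + 1) * 2 ^ a * real (a + 1) / sqrt (real N)
         + (1 - real (N choose a) * fact a / real N ^ a) * (u ^ a / (1 + u) ^ (a + 1))"
proof -
  note N1 = assms(1) and mupos = assms(2)
  have pos: "\<And>i. i \<le> N \<Longrightarrow> p i > 0" using assms(3) by auto
  define r where "r = p 0"
  have rpos: "r > 0" using pos[of 0] r_def by simp
  have Npos: "real N > 0" using N1 by simp
  have dot: "dot_vec N (fit_vec N) p = real N * r"
  proof -
    have "dot_vec N (fit_vec N) p = (\<Sum>i=0..N. if i = 0 then real N * p i else 0)"
      unfolding dot_vec_def fit_vec_def by (rule sum.cong) auto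
    also have "\<dots> = real N * r" by (simp add: r_def)
    finally show ?thesis .
  qed
  have eq0: "real N * r + mu * (- real N * r + p 1) = real N * r * r"
    using assms(5)[rule_format, of 0] row_eq[of 0 N mu p] N1 by (simp add: dot r_def)
  have eqk: "\<And>k. 1 \<le> k \<Longrightarrow> k \<le> N \<Longrightarrow> mu * (- real N * p k + (real N - real k + 1) * p (k - 1)
      + (if k < N then (real k + 1) * p (k + 1) else 0)) = real N * r * p k"
  proof -
    fix k assume k: "1 \<le> k" "k \<le> N"
    have "mat_vec N (\<lambda>i j. fit_mat N i j + mu * mut_mat N i j) p k = real N * r * p k"
      using assms(5) k by (simp add: dot)
    then show "mu * (- real N * p k + (real N - real k + 1) * p (k - 1)
      + (if k < N then (real k + 1) * p (k + 1) else 0)) = real N * r * p k"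
      unfolding row_eq[OF k(2)] using k by simp
  qed
  define u where "u = mu / r"
  have upos: "u > 0" using mupos rpos u_def by simp
  have step_le: "p j \<le> u * p (j - 1)" if j: "1 \<le> j" "j \<le> N" for j
  proof -
    have t: "mu * ((real N - real j + 1) * p (j - 1) - real j * p j) = real N * r * (\<Sum>k=j..N. p k)"
      by (rule tail[OF N1 eqk j]) auto
    have "p j \<le> (\<Sum>k=j..N. p k)"
      using j pos by (intro member_le_sum) (auto intro: less_imp_le)
    then have "real N * r * p j \<le> real N * r * (\<Sum>k=j..N. p k)"
      using Npos rpos by (intro mult_left_mono) auto
    also have "\<dots> \<le> mu * ((real N - real j + 1) * p (j - 1))"
      unfolding t[symmetric] using mupos pos[of j] j by (simp add: algebra_simps)
    also have "\<dots> \<le> mu * (real N * p (j - 1))"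
      using mupos pos[of "j-1"] j by (intro mult_left_mono mult_right_mono) (auto intro: less_imp_le)
    finally have "real N * (r * p j) \<le> real N * (mu * p (j - 1))" by (simp add: algebra_simps)
    then have "r * p j \<le> mu * p (j - 1)" using Npos by simp
    then show ?thesis using rpos unfolding u_def by (simp add: field_simps)
  qed
  have p0le: "p 0 \<le> 1"
  proof -
    have "p 0 \<le> (\<Sum>i = 0..N. p i)"
      using pos by (intro member_le_sum) (auto intro: less_imp_le)
    then show ?thesis using assms(4) by simp
  qed
  have p_pow: "p j \<le> u ^ j" if "j \<le> N" for j
    using that
  proof (induction j)
    case 0 then show ?case using p0le by simp
  next
    case (Suc j)
    have "p (Suc j) \<le> u * p j" using step_le[of "Suc j"] Suc by simp
    also have "\<dots> \<le> u * u ^ j" using Suc upos by (intro mult_left_mono) auto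
    finally show ?case by simp
  qed
  define pp where "pp k = (if k \<le> N then p k else 0)" for k
  have pp_le: "pp k \<le> u ^ k" for k using p_pow upos unfolding pp_def by auto
  have pp_ge: "pp k \<ge> 0" for k using pos unfolding pp_def by (auto intro: less_imp_le)
  have recur: "(1 + u) * p k = u * (1 - (real k - 1) / real N) * p (k - 1) + u * (real k + 1) / real N * pp (k + 1)"
    if k: "1 \<le> k" "k \<le> N" for k
  proof -
    have e: "mu * (- real N * p k + (real N - real k + 1) * p (k - 1) + (real k + 1) * pp (k + 1))
        = real N * r * p k"
      using eqk[OF k] unfolding pp_def by (cases "k < N") auto
    have e2: "(1 + u) * p k * (real N * r) = (u * (1 - (real k - 1) / real N) * p (k - 1) + u * (real k + 1) / real N * pp (k + 1)) * (real N * r)"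
    proof -
      have h: "mu * (real N * p k) + (r * (real N * p k) + mu * (real k * p (k - 1)))
        = mu * pp (k + 1) + (mu * p (k - 1) + (mu * (real k * pp (k + 1)) + mu * (real N * p (k - 1))))"
        using e by (simp add: algebra_simps)
      have h2: "r*r*r*real N*real N*(mu * (real N * p k) + (r * (real N * p k) + mu * (real k * p (k - 1))))
        = r*r*r*real N*real N*(mu * pp (k + 1) + (mu * p (k - 1) + (mu * (real k * pp (k + 1)) + mu * (real N * p (k - 1)))))"
        using h by simp
      show ?thesis unfolding u_def using rpos Npos h2 by (simp add: field_simps)
    qed
    show ?thesis using e2 rpos Npos by simp

  qed
  have rec0: "(1 + u) * p 0 = 1 + u * p 1 / real N"
    using eq0 rpos Npos unfolding u_def r_def by (simp add: field_simps)
  define T where "T a = u ^ a / (1 + u) ^ (a + 1)" for a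
  have T_Suc: "T (Suc a) = u / (1 + u) * T a" for a unfolding T_def using upos by (simp add: field_simps)
  have T_ge: "T a \<ge> 0" for a unfolding T_def using upos by simp
  define c where "c a = real (N choose a) * fact a / real N ^ a" for a
  have c_Suc: "c (Suc a) = c a * (1 - real a / real N)" if "a < N" for a
  proof -
    have f: "(fact (N - a) :: real) = real (N - a) * fact (N - Suc a)"
      using that by (metis Suc_diff_Suc fact_Suc of_nat_fact of_nat_mult)
    have "c (Suc a) = fact N / fact (N - Suc a) / real N ^ Suc a"
      unfolding c_def using that by (simp add: binomial_fact del: of_nat_Suc)
    moreover have "c a = fact N / fact (N - a) / real N ^ a"
      unfolding c_def using that by (simp add: binomial_fact)
    ultimately have A: "c (Suc a) * (real N * (real N ^ a * fact (N - Suc a))) = fact N"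
        and B: "c a * (real (N - a) * (real N ^ a * fact (N - Suc a))) = fact N"
      using Npos f by (auto simp: field_simps)
    define K where "K = real N ^ a * (fact (N - Suc a) :: real)"
    have K: "K > 0" unfolding K_def using Npos by simp
    have "(c (Suc a) * real N) * K = (c a * real (N - a)) * K"
      using A B unfolding K_def by (simp add: algebra_simps)
    then have "c (Suc a) * real N = c a * real (N - a)" using K by simp
    then show ?thesis using that Npos by (simp add: field_simps of_nat_diff)
  qed
  have c_bounds: "0 \<le> c a \<and> c a \<le> 1" if "a \<le> N" for a
    using that
  proof (induction a)
    case 0 then show ?case by (simp add: c_def)
  next
    case (Suc a)
    then have h: "0 \<le> 1 - real a / real N" "1 - real a / real N \<le> 1" using Npos by (auto simp: field_simps)
    show ?case using Suc c_Suc[of a] h by (auto intro: mult_le_one)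
  qed
  have lower: "c a * T a \<le> p a" if "a \<le> N" for a
    using that
  proof (induction a)
    case 0
    have "(1 + u) * T 0 \<le> (1 + u) * p 0"
      unfolding rec0 T_def using upos pos[of 1] N1 by simp
    then show ?case using upos by (simp add: c_def)
  next
    case (Suc a)
    have h: "0 \<le> 1 - real a / real N" using Suc Npos by (auto simp: field_simps)
    have "(1 + u) * (c (Suc a) * T (Suc a)) = u * (1 - real a / real N) * (c a * T a)"
    proof -
      have q: "(1+u)*(u/(1+u)) = u" using upos by simp
      have "(1 + u) * (c (Suc a) * T (Suc a)) = ((1+u)*(u/(1+u))) * ((1 - real a / real N) * (c a * T a))"
        using Suc by (simp only: c_Suc T_Suc mult_ac)
      then show ?thesis unfolding q by (simp only: mult_ac)
    qed
    also have "\<dots> \<le> u * (1 - real a / real N) * p a"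
      using Suc h upos by (intro mult_left_mono) auto
    also have "\<dots> \<le> (1 + u) * p (Suc a)"
      using recur[of "Suc a"] Suc upos pp_ge[of "Suc a + 1"] Npos
      by (simp add: mult_nonneg_nonneg)
    finally show ?case using upos by simp
  qed
  define B where "B a = u ^ (a + 2) * (real a + 1) * (real a + 2) / (2 * real N * (1 + u))" for a
  have upper: "p a - T a \<le> B a" if "a \<le> N" for a
    using that
  proof (induction a)
    case 0
    have "u * p 1 \<le> u * u" using p_pow[of 1] N1 upos by (intro mult_left_mono) auto
    then have "(1 + u) * p 0 \<le> 1 + u * u / real N" unfolding rec0 using Npos
      by (simp add: divide_right_mono)
    then have "p 0 \<le> (1 + u * u / real N) / (1 + u)" using upos by (simp add: field_simps)
    moreover have "(1 + u * u / real N) / (1 + u) = 1 / (1 + u) + u * u / (real N * (1 + u))"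
      by (simp add: add_divide_distrib)
    moreover have "T 0 = 1 / (1 + u)" unfolding T_def by simp
    moreover have "B 0 = u * u / (real N * (1 + u))" unfolding B_def by (simp add: power2_eq_square)
    ultimately show ?case by simp
  next
    case (Suc a)
    have ih: "p a - T a \<le> B a" using Suc by simp
    have pa: "p a \<ge> 0" using pos[of a] Suc by simp
    have h: "0 \<le> 1 - real a / real N" using Suc Npos by (auto simp: field_simps)
    have t1: "u * (1 - real a / real N) * p a \<le> u * p a"
      using upos pa Npos by (simp add: mult_le_cancel_left mult_right_le_one_le field_simps)
    have t2: "u * (real a + 2) / real N * pp (a + 2) \<le> u * (real a + 2) / real N * u ^ (a + 2)"
      using upos Npos pp_le[of "a+2"] by (intro mult_left_mono) auto
    have r1: "(1 + u) * p (Suc a) \<le> u * p a + u * (real a + 2) / real N * u ^ (a + 2)"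
      using recur[of "Suc a"] Suc t1 t2 by (simp add: add_ac)
    have uB: "u * B a \<le> u ^ (a + 3) * (real a + 1) * (real a + 2) / (2 * real N)"
    proof -
      have x: "0 \<le> u ^ (a + 3) * (real a + 1) * (real a + 2) / (2 * real N)" using upos Npos by simp
      have "u * B a = (u ^ (a + 3) * (real a + 1) * (real a + 2) / (2 * real N)) / (1 + u)"
        unfolding B_def using upos Npos by (simp add: field_simps power_add power3_eq_cube power2_eq_square)
      also have "\<dots> \<le> u ^ (a + 3) * (real a + 1) * (real a + 2) / (2 * real N)"
        using divide_left_mono[OF _ x, of 1 "1+u"] upos by simp
      finally show ?thesis .
    qed
    have "(1 + u) * (p (Suc a) - T (Suc a)) = (1 + u) * p (Suc a) - u * T a"
      using upos by (simp add: T_Suc field_simps)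
    also have "\<dots> \<le> u * (p a - T a) + u * (real a + 2) / real N * u ^ (a + 2)"
      using r1 by (simp add: algebra_simps)
    also have "\<dots> \<le> u * B a + u * (real a + 2) / real N * u ^ (a + 2)"
      using ih upos by (simp add: mult_left_mono)
    also have "\<dots> \<le> u ^ (a + 3) * (real a + 1) * (real a + 2) / (2 * real N) + u * (real a + 2) / real N * u ^ (a + 2)"
      using uB by simp
    also have "\<dots> = u ^ (a + 3) * (real a + 2) * (real a + 3) / (2 * real N)"
      using Npos by (simp add: field_simps power_add power3_eq_cube power2_eq_square)
    also have "\<dots> = (1 + u) * B (Suc a)"
    proof -
      have "B (Suc a) = u ^ (a + 3) * (real a + 2) * (real a + 3) / (2 * real N * (1 + u))"
        unfolding B_def by (simp add: field_simps power_add power3_eq_cube)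
      then show ?thesis using upos by simp
    qed
    finally show ?case using upos by (simp add: mult_le_cancel_left_pos)
  qed
  show ?thesis
  proof
    fix a assume a: "a \<in> {1..N}"
    then have a1: "1 \<le> a" and aN: "a \<le> N" by auto
    have rbar: "real N * r / real N = r" using Npos by simp
    define E where "E = u ^ (a + 1) * 2 ^ a * real (a + 1) / sqrt (real N)"
    have BE: "B a \<le> E"
    proof -
      have f1: "u / (1 + u) \<le> 1" using upos by simp
      have f2: "(real a + 2) / 2 \<le> 2 ^ a" using two_pow_ge[of a] by simp
      have sq: "sqrt (real N) \<le> real N"
      proof -
        have s1: "1 \<le> sqrt (real N)" using N1 by simp
        have "sqrt (real N) * 1 \<le> sqrt (real N) * sqrt (real N)"
          using s1 by (intro mult_left_mono) auto
        then show ?thesis using Npos by simp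
      qed
      have sqp: "sqrt (real N) > 0" using Npos by simp
      have f3: "1 / real N \<le> 1 / sqrt (real N)" using sq sqp by (simp add: frac_le)
      have "u / (1 + u) * ((real a + 2) / 2) * (1 / real N) \<le> 1 * 2 ^ a * (1 / sqrt (real N))"
        using f1 f2 f3 upos Npos by (intro mult_mono) auto
      then have "u ^ (a + 1) * (real a + 1) * (u / (1 + u) * ((real a + 2) / 2) * (1 / real N))
          \<le> u ^ (a + 1) * (real a + 1) * (1 * 2 ^ a * (1 / sqrt (real N)))"
        using upos by (intro mult_left_mono) auto
      then show ?thesis unfolding B_def E_def using upos Npos by (simp add: field_simps)
    qed
    have cb: "0 \<le> c a" "c a \<le> 1" using c_bounds[OF aN] by auto
    have Eg: "E \<ge> 0" unfolding E_def using upos by simp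
    have "\<bar>p a - T a\<bar> \<le> E + (1 - c a) * T a"
    proof -
      have "T a - p a \<le> (1 - c a) * T a" using lower[OF aN] by (simp add: algebra_simps)
      moreover have "p a - T a \<le> E + (1 - c a) * T a"
        using upper[OF aN] BE cb T_ge[of a] by (smt (verit) mult_nonneg_nonneg)
      ultimately show ?thesis using Eg by linarith
    qed
    then show "let mbar = dot_vec N (fit_vec N) p; rbar = mbar / real N; u = mu / rbar in
      \<bar>p a - u ^ a / (1 + u) ^ (a + 1)\<bar>
      \<le> u ^ (a + 1) * 2 ^ a * real (a + 1) / sqrt (real N)
         + (1 - real (N choose a) * fact a / real N ^ a) * (u ^ a / (1 + u) ^ (a + 1))"
      unfolding Let_def dot rbar E_def T_def c_def u_def by simp
  qed
qed

end
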